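(* Let $n\ge3$ and let $M$ be a polytope in $\mathbb{R}^n$ with $rB\subseteq M\subseteq RB$ for some $r,R>0$. Then for every pair of neighboring facets $F\sim F'$, $$\tan\Big(\frac{l_{F,F'}}2\Big)\le\frac Rr,\qquad\text{and in particular}\qquad l_{F,F'}^2\le\pi^2\Big(1-\frac{r^2}{R^2+r^2}\Big).$$
   Context: $B$ is the unit ball. Facets $F,F'$ of $M$ are neighbors if $\dim(F\cap F')=n-2$; $n_F$ is the outer unit normal of $F$; $l_{F,F'}$ is the geodesic distance on $S^{n-1}$ between $n_F$ and $n_{F'}$ (i.e. $\cos l_{F,F'}=\langle n_F,n_{F'}\rangle$, $l_{F,F'}\in[0,\pi]$). *)

theory Defs
  imports "HOL-Analysis.Analysis"
begin

definition neighbor_facets :: "'a::euclidean_space set \<Rightarrow> 'a set \<Rightarrow> 'a set \<Rightarrow> bool" where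
  "neighbor_facets M F F' \<longleftrightarrow>
     F facet_of M \<and> F' facet_of M \<and> aff_dim (F \<inter> F') = int DIM('a) - 2"

definition outer_unit_normal :: "'a::euclidean_space set \<Rightarrow> 'a set \<Rightarrow> 'a \<Rightarrow> bool" where
  "outer_unit_normal M F u \<longleftrightarrow>
     norm u = 1 \<and> (\<exists>h. M \<subseteq> {x. u \<bullet> x \<le> h} \<and> F = M \<inter> {x. u \<bullet> x = h})"

definition sphere_dist :: "'a::euclidean_space \<Rightarrow> 'a \<Rightarrow> real" where
  "sphere_dist u v = arccos (u \<bullet> v)"

end

theory Submission
  imports Defs
begin

lemma jordan_sin:
  fixes y :: real
  assumes "0 \<le> y" "y \<le> pi/2"
  shows "2 * y / pi \<le> sin y"
proof -
  have cv: "convex_on {0..pi/2} (\<lambda>x. - sin x)"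
  proof (rule f''_ge0_imp_convex[where f' = "\<lambda>x. - cos x" and f'' = "\<lambda>x. sin x"])
    show "convex {0..pi/2}" by simp
    show "((\<lambda>x. - sin x) has_real_derivative - cos x) (at x)" for x
      by (rule derivative_eq_intros | simp)+
    show "((\<lambda>x. - cos x) has_real_derivative sin x) (at x)" for x
      by (rule derivative_eq_intros | simp)+
    show "x \<in> {0..pi/2} \<Longrightarrow> 0 \<le> sin x" for x
      by (rule sin_ge_zero) auto
  qed
  define t where "t = 2 * y / pi"
  have t0: "0 \<le> t" "t \<le> 1" using assms pi_gt_zero unfolding t_def by (auto simp: field_simps)
  have "(\<lambda>x. - sin x) ((1 - t) *\<^sub>R 0 + t *\<^sub>R (pi/2)) \<le> (1 - t) * (- sin 0) + t * (- sin (pi/2))"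
    using convex_onD_Icc[OF cv _ t0] by simp
  moreover have "(1 - t) *\<^sub>R 0 + t *\<^sub>R (pi/2) = y" unfolding t_def by simp
  ultimately show ?thesis unfolding t_def by simp
qed

theorem lemma7p5:
  fixes M F F' :: "'a::euclidean_space set" and r R :: real and u u' :: 'a
  assumes "DIM('a) \<ge> 3"
    and "polytope M"
    and "r > 0" and "R > 0"
    and "cball 0 r \<subseteq> M" and "M \<subseteq> cball 0 R"
    and "neighbor_facets M F F'"
    and "outer_unit_normal M F u" and "outer_unit_normal M F' u'"
  shows "tan (sphere_dist u u' / 2) \<le> R / r
       \<and> (sphere_dist u u')\<^sup>2 \<le> pi\<^sup>2 * (1 - r\<^sup>2 / (R\<^sup>2 + r\<^sup>2))"
proof -
  obtain h where nu: "norm u = 1" and hM: "M \<subseteq> {x. u \<bullet> x \<le> h}" and hF: "F = M \<inter> {x. u \<bullet> x = h}"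
    using assms(8) unfolding outer_unit_normal_def by blast
  obtain h' where nu': "norm u' = 1" and hM': "M \<subseteq> {x. u' \<bullet> x \<le> h'}" and hF': "F' = M \<inter> {x. u' \<bullet> x = h'}"
    using assms(9) unfolding outer_unit_normal_def by blast
  have ad: "aff_dim (F \<inter> F') = int DIM('a) - 2" using assms(7) unfolding neighbor_facets_def by blast
  have "F \<inter> F' \<noteq> {}"
  proof
    assume "F \<inter> F' = {}"
    then have "aff_dim (F \<inter> F') = -1" by simp
    with ad assms(1) show False by simp
  qed
  then obtain x where xF: "x \<in> F" and xF': "x \<in> F'" by blast
  have xM: "x \<in> M" and ux: "u \<bullet> x = h" and ux': "u' \<bullet> x = h'" using xF xF' hF hF' by auto
  have nx: "norm x \<le> R" using xM assms(6) by auto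
  have "r *\<^sub>R u \<in> M" using assms(5) nu assms(3) by auto
  then have "u \<bullet> (r *\<^sub>R u) \<le> h" using hM by auto
  then have hr: "r \<le> h" using nu by (simp add: inner_commute dot_square_norm)
  have "r *\<^sub>R u' \<in> M" using assms(5) nu' assms(3) by auto
  then have "u' \<bullet> (r *\<^sub>R u') \<le> h'" using hM' by auto
  then have hr': "r \<le> h'" using nu' by (simp add: inner_commute dot_square_norm)
  define a where "a = u \<bullet> u'"
  have a1: "\<bar>a\<bar> \<le> 1" unfolding a_def using Cauchy_Schwarz_ineq2[of u u'] nu nu' by simp
  have nsq: "(norm (u + u'))\<^sup>2 = 2 + 2 * a"
  proof -
    have "u \<bullet> u = 1" "u' \<bullet> u' = 1" using nu nu' by (simp_all add: dot_square_norm)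
    then show ?thesis unfolding a_def power2_norm_eq_inner
      by (simp add: inner_add_left inner_add_right inner_commute)
  qed
  have "2 * r \<le> (u + u') \<bullet> x" using hr hr' ux ux' by (simp add: inner_add_left)
  also have "\<dots> \<le> norm (u + u') * norm x" by (rule norm_cauchy_schwarz)
  also have "\<dots> \<le> norm (u + u') * R" using nx by (simp add: mult_left_mono)
  finally have key: "2 * r \<le> norm (u + u') * R" .
  define th where "th = arccos a"
  have th: "0 \<le> th" "th \<le> pi" "cos th = a" unfolding th_def using a1 by (auto intro: arccos_lbound arccos_ubound)
  define c where "c = cos (th/2)"
  define s where "s = sin (th/2)"
  have c0: "0 \<le> c" unfolding c_def using th by (intro cos_ge_zero) auto
  have s0: "0 \<le> s" unfolding s_def using th by (intro sin_ge_zero) auto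
  have cs: "s\<^sup>2 + c\<^sup>2 = 1" unfolding s_def c_def by simp
  have "cos th = 2 * c\<^sup>2 - 1" unfolding c_def using cos_double_cos[of "th/2"] by simp
  then have "(norm (u + u'))\<^sup>2 = (2 * c)\<^sup>2" using nsq th by (simp add: power2_eq_square)
  then have nc: "norm (u + u') = 2 * c" using c0 power2_eq_iff_nonneg[of "norm (u + u')" "2 * c"] by simp
  have rc: "r \<le> c * R" using key nc by simp
  have cpos: "0 < c" using rc assms(3) c0 by (cases "c = 0") auto
  have sle: "s \<le> 1" unfolding s_def by (rule sin_le_one)
  have sd: "sphere_dist u u' = th" unfolding sphere_dist_def th_def a_def by simp
  have tan1: "tan (th/2) = s / c" unfolding tan_def s_def c_def by simp
  have "s / c \<le> 1 / c" using sle cpos by (simp add: divide_right_mono)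
  also have "1 / c \<le> R / r"
  proof -
    have "r * 1 \<le> R * c" using rc by (simp add: mult.commute)
    then show ?thesis using cpos assms(3) by (simp add: divide_simps)
  qed
  finally have A: "tan (th/2) \<le> R / r" using tan1 by simp
  have j: "2 * (th/2) / pi \<le> s" unfolding s_def using th by (intro jordan_sin) auto
  then have "th \<le> pi * s" using pi_gt_zero by (simp add: field_simps)
  then have "th\<^sup>2 \<le> (pi * s)\<^sup>2" using th by (intro power_mono) auto
  also have "\<dots> = pi\<^sup>2 * s\<^sup>2" by (simp add: power_mult_distrib)
  also have "\<dots> \<le> pi\<^sup>2 * (1 - r\<^sup>2 / (R\<^sup>2 + r\<^sup>2))"
  proof (rule mult_left_mono)
    have "r\<^sup>2 \<le> (c * R)\<^sup>2" using rc assms(3) by (intro power_mono) auto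
    then have "r\<^sup>2 \<le> c\<^sup>2 * R\<^sup>2" by (simp add: power_mult_distrib)
    then have "r\<^sup>2 / (R\<^sup>2 + r\<^sup>2) \<le> c\<^sup>2 * R\<^sup>2 / (R\<^sup>2 + r\<^sup>2)" using assms(3) by (intro divide_right_mono) auto
    also have "\<dots> \<le> c\<^sup>2 * (R\<^sup>2 + r\<^sup>2) / (R\<^sup>2 + r\<^sup>2)"
      using assms(3) by (intro divide_right_mono mult_left_mono) auto
    also have "\<dots> = c\<^sup>2" using assms(3) by (simp add: add_pos_pos)
    finally show "s\<^sup>2 \<le> 1 - r\<^sup>2 / (R\<^sup>2 + r\<^sup>2)" using cs by simp
  qed simp
  finally show ?thesis using A sd by simp
qed

end
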